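(* Consider the quantized estimation system described in the context. Let $D_{\mathbf{u}}=\prod_{j=1}^N\prod_{l=1}^{L_j}R_{jl}$, let $\mathbf{a}_1,\dots,\mathbf{a}_{D_{\mathbf{u}}}$ enumerate all possible realizations of $\mathbf{u}$, and define $\varphi_{\mathbf{u}}:\Theta\to\mathbb{R}^{D_{\mathbf{u}}}$ by $\varphi_{\mathbf{u}}(\theta)=[\Pr(\mathbf{a}_1\mid\theta),\dots,\Pr(\mathbf{a}_{D_{\mathbf{u}}}\mid\theta)]^T$. For each $j$ fix an enumeration $\mathbf{s}^{(j)}_1,\dots,\mathbf{s}^{(j)}_{|\mathcal{S}_j|}$ of $\mathcal{S}_j$, let $\psi_j(\theta)=[q_j^{(\mathbf{s}^{(j)}_1)}(\theta),\dots,q_j^{(\mathbf{s}^{(j)}_{|\mathcal{S}_j|-1})}(\theta)]^T$, and define $\Psi:\Theta\to\mathbb{R}^{\sum_{j=1}^N\prod_{l=1}^{L_j}R_{jl}-N}$ by $\Psi(\theta)=[\psi_1(\theta)^T,\dots,\psi_N(\theta)^T]^T$. Then $\varphi_{\mathbf{u}}$ is injective if and only if $\Psi$ is injective. Consequently, the parameter space $\Theta$ is identifiable if and only if $\Psi$ is injective. Moreover, for any $N\ge1$ and any integers $R_{jl}\ge1$, the dimension of $\Psi(\theta)$ is strictly smaller than that of $\varphi_{\mathbf{u}}(\theta)$, i.e. $\sum_{j=1}^N\prod_{l=1}^{L_j}R_{jl}-N<\prod_{j=1}^N\prod_{l=1}^{L_j}R_{jl}$.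
   Context: Setting: $\Theta\subset\mathbb{R}^{D_\theta}$ is a parameter set. There are $N\ge 1$ sensors. Sensor $j$ observes a random vector $\mathbf{x}_j$ with law $\mathscr{P}_j^\theta$ on a measurable space $(\mathscr{X}_j,\mathscr{F}_j)$, indexed by $\theta\in\Theta$; $\mathbf{x}_1,\dots,\mathbf{x}_N$ are independent. Each $\mathbf{x}_j$ is partitioned into $L_j\ge1$ disjoint subvectors $\mathbf{x}_j=[\mathbf{x}_{j1}^T,\dots,\mathbf{x}_{jL_j}^T]^T$. For each $j,l$, $\gamma_{jl}$ is an $R_{jl}$-level vector quantizer: there are disjoint regions $I_{jl}^{(1)},\dots,I_{jl}^{(R_{jl})}$ covering its domain and $\gamma_{jl}(\mathbf{x}_{jl})=r$ iff $\mathbf{x}_{jl}\in I_{jl}^{(r)}$. The (measurable) superquantizer is $\Gamma_j(\mathbf{x}_j)=[\gamma_{j1}(\mathbf{x}_{j1}),\dots,\gamma_{jL_j}(\mathbf{x}_{jL_j})]^T$, $\mathbf{u}_j=\Gamma_j(\mathbf{x}_j)$, $\mathbf{u}=[\mathbf{u}_1^T,\dots,\mathbf{u}_N^T]^T$. $\mathcal{S}_j$ is the set of all possible outcomes of $\Gamma_j$ ($|\mathcal{S}_j|=\prod_l R_{jl}$), $q_j^{(\mathbf{s})}(\theta)=\mathscr{P}_j^\theta(\Gamma_j(\mathbf{x}_j)=\mathbf{s})$, and $\Pr(\mathbf{u}\mid\theta)=\prod_{j=1}^N q_j^{(\mathbf{u}_j)}(\theta)$. Two distinct points $\theta,\theta'\in\Theta$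 are observationally equivalent if $\Pr(\mathbf{u}\mid\theta)=\Pr(\mathbf{u}\mid\theta')$ for all possible $\mathbf{u}$. A point $\theta\in\Theta$ is identifiable if no $\theta'\in\Theta\setminus\{\theta\}$ is observationally equivalent to it. The parameter space $\Theta$ is identifiable if every $\theta\in\Theta$ is identifiable. *)

theory Defs
  imports "HOL-Probability.Probability"
begin

text \<open>Sensors are indexed by j < N; sensor j has L j subvectors, indexed by l < L j.
  sub j l x extracts the l-th subvector of the observation x of sensor j;
  gam j l is the R j l-level quantizer with levels 1..R j l
  (region r of the quantizer is the set of points mapped to r).
  P j theta is the law of the observation of sensor j under theta.\<close>

definition Gamma ::
  "(nat \<Rightarrow> nat) \<Rightarrow> (nat \<Rightarrow> nat \<Rightarrow> 'y \<Rightarrow> nat) \<Rightarrow> (nat \<Rightarrow> nat \<Rightarrow> 'x \<Rightarrow> 'y)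
    \<Rightarrow> nat \<Rightarrow> 'x \<Rightarrow> (nat \<Rightarrow> nat)" where
  "Gamma L gam sub j x = restrict (\<lambda>l. gam j l (sub j l x)) {..<L j}"

definition outcomes :: "(nat \<Rightarrow> nat) \<Rightarrow> (nat \<Rightarrow> nat \<Rightarrow> nat) \<Rightarrow> nat \<Rightarrow> (nat \<Rightarrow> nat) set" where
  "outcomes L R j = PiE {..<L j} (\<lambda>l. {1..R j l})"

definition realizations ::
  "nat \<Rightarrow> (nat \<Rightarrow> nat) \<Rightarrow> (nat \<Rightarrow> nat \<Rightarrow> nat) \<Rightarrow> (nat \<Rightarrow> nat \<Rightarrow> nat) set" where
  "realizations N L R = PiE {..<N} (outcomes L R)"

definition qprob ::
  "(nat \<Rightarrow> 'p \<Rightarrow> 'x measure) \<Rightarrow> (nat \<Rightarrow> nat) \<Rightarrow> (nat \<Rightarrow> nat \<Rightarrow> 'y \<Rightarrow> nat)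
    \<Rightarrow> (nat \<Rightarrow> nat \<Rightarrow> 'x \<Rightarrow> 'y) \<Rightarrow> nat \<Rightarrow> (nat \<Rightarrow> nat) \<Rightarrow> 'p \<Rightarrow> real" where
  "qprob P L gam sub j s theta =
     measure (P j theta) {x \<in> space (P j theta). Gamma L gam sub j x = s}"

definition Pr_u ::
  "(nat \<Rightarrow> 'p \<Rightarrow> 'x measure) \<Rightarrow> nat \<Rightarrow> (nat \<Rightarrow> nat) \<Rightarrow> (nat \<Rightarrow> nat \<Rightarrow> 'y \<Rightarrow> nat)
    \<Rightarrow> (nat \<Rightarrow> nat \<Rightarrow> 'x \<Rightarrow> 'y) \<Rightarrow> (nat \<Rightarrow> nat \<Rightarrow> nat) \<Rightarrow> 'p \<Rightarrow> real" where
  "Pr_u P N L gam sub u theta = (\<Prod>j<N. qprob P L gam sub j (u j) theta)"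

definition obs_equiv ::
  "(nat \<Rightarrow> 'p \<Rightarrow> 'x measure) \<Rightarrow> nat \<Rightarrow> (nat \<Rightarrow> nat) \<Rightarrow> (nat \<Rightarrow> nat \<Rightarrow> nat)
    \<Rightarrow> (nat \<Rightarrow> nat \<Rightarrow> 'y \<Rightarrow> nat) \<Rightarrow> (nat \<Rightarrow> nat \<Rightarrow> 'x \<Rightarrow> 'y) \<Rightarrow> 'p \<Rightarrow> 'p \<Rightarrow> bool" where
  "obs_equiv P N L R gam sub theta theta' \<longleftrightarrow>
     theta \<noteq> theta' \<and>
     (\<forall>u \<in> realizations N L R. Pr_u P N L gam sub u theta = Pr_u P N L gam sub u theta')"

definition identifiable_point ::
  "'p set \<Rightarrow> (nat \<Rightarrow> 'p \<Rightarrow> 'x measure) \<Rightarrow> nat \<Rightarrow> (nat \<Rightarrow> nat) \<Rightarrow> (nat \<Rightarrow> nat \<Rightarrow> nat)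
    \<Rightarrow> (nat \<Rightarrow> nat \<Rightarrow> 'y \<Rightarrow> nat) \<Rightarrow> (nat \<Rightarrow> nat \<Rightarrow> 'x \<Rightarrow> 'y) \<Rightarrow> 'p \<Rightarrow> bool" where
  "identifiable_point Theta P N L R gam sub theta \<longleftrightarrow>
     (\<forall>theta' \<in> Theta - {theta}. \<not> obs_equiv P N L R gam sub theta theta')"

definition identifiable_space ::
  "'p set \<Rightarrow> (nat \<Rightarrow> 'p \<Rightarrow> 'x measure) \<Rightarrow> nat \<Rightarrow> (nat \<Rightarrow> nat) \<Rightarrow> (nat \<Rightarrow> nat \<Rightarrow> nat)
    \<Rightarrow> (nat \<Rightarrow> nat \<Rightarrow> 'y \<Rightarrow> nat) \<Rightarrow> (nat \<Rightarrow> nat \<Rightarrow> 'x \<Rightarrow> 'y) \<Rightarrow> bool" where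
  "identifiable_space Theta P N L R gam sub \<longleftrightarrow>
     (\<forall>theta \<in> Theta. identifiable_point Theta P N L R gam sub theta)"

text \<open>varphi_u(theta) = [Pr(a_1|theta), ..., Pr(a_D|theta)], as a list of length D,
  where a enumerates the realizations (a i is the (i+1)-th one).\<close>
definition phi_u ::
  "(nat \<Rightarrow> 'p \<Rightarrow> 'x measure) \<Rightarrow> nat \<Rightarrow> (nat \<Rightarrow> nat) \<Rightarrow> (nat \<Rightarrow> nat \<Rightarrow> 'y \<Rightarrow> nat)
    \<Rightarrow> (nat \<Rightarrow> nat \<Rightarrow> 'x \<Rightarrow> 'y) \<Rightarrow> (nat \<Rightarrow> nat \<Rightarrow> nat \<Rightarrow> nat) \<Rightarrow> nat \<Rightarrow> 'p \<Rightarrow> real list" where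
  "phi_u P N L gam sub a D theta = map (\<lambda>i. Pr_u P N L gam sub (a i) theta) [0..<D]"

definition Psi ::
  "(nat \<Rightarrow> 'p \<Rightarrow> 'x measure) \<Rightarrow> nat \<Rightarrow> (nat \<Rightarrow> nat) \<Rightarrow> (nat \<Rightarrow> nat \<Rightarrow> nat)
    \<Rightarrow> (nat \<Rightarrow> nat \<Rightarrow> 'y \<Rightarrow> nat) \<Rightarrow> (nat \<Rightarrow> nat \<Rightarrow> 'x \<Rightarrow> 'y)
    \<Rightarrow> (nat \<Rightarrow> nat \<Rightarrow> nat \<Rightarrow> nat) \<Rightarrow> 'p \<Rightarrow> real list" where
  "Psi P N L R gam sub es theta =
     concat (map (\<lambda>j. map (\<lambda>i. qprob P L gam sub j (es j i) theta)
                          [0..<card (outcomes L R j) - 1]) [0..<N])"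

end

theory Submission
  imports Defs
begin

lemma marginal:
  fixes q :: "nat \<Rightarrow> (nat\<Rightarrow>nat) \<Rightarrow> real"
  assumes fin: "finite I" "\<And>k. k \<in> I \<Longrightarrow> finite (S k)" and j: "j \<in> I" and s: "s \<in> S j"
    and one: "\<And>k. k \<in> I \<Longrightarrow> (\<Sum>t\<in>S k. q k t) = 1"
  shows "(\<Sum>u\<in>PiE I S. if u j = s then (\<Prod>k\<in>I. q k (u k)) else 0) = q j s"
proof -
  define q' where "q' k t = (if k = j then (if t = s then q k t else 0) else q k t)" for k t
  have "(\<Prod>k\<in>I. \<Sum>t\<in>S k. q' k t) = (\<Sum>u\<in>PiE I S. \<Prod>k\<in>I. q' k (u k))"
    by (rule prod_sum_PiE) (use fin in auto)
  moreover have "(\<Prod>k\<in>I. \<Sum>t\<in>S k. q' k t) = q j s"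
  proof -
    have "(\<Prod>k\<in>I. \<Sum>t\<in>S k. q' k t) = (\<Sum>t\<in>S j. q' j t) * (\<Prod>k\<in>I-{j}. \<Sum>t\<in>S k. q' k t)"
      using fin j by (simp add: prod.remove)
    also have "(\<Sum>t\<in>S j. q' j t) = q j s" using fin j s by (simp add: q'_def sum.delta)
    also have "(\<Prod>k\<in>I-{j}. \<Sum>t\<in>S k. q' k t) = 1"
      by (rule prod.neutral) (auto simp: q'_def one)
    finally show ?thesis by simp
  qed
  moreover have "(\<Prod>k\<in>I. q' k (u k)) = (if u j = s then (\<Prod>k\<in>I. q k (u k)) else 0)" for u
  proof (cases "u j = s")
    case True then show ?thesis by (auto simp: q'_def intro!: prod.cong)
  next
    case False then show ?thesis using fin j by (auto simp: q'_def intro!: prod_zero bexI[of _ j])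
  qed
  ultimately show ?thesis by simp
qed

lemma concat_eq_iff:
  assumes "\<And>x. x \<in> set xs \<Longrightarrow> length (g x) = length (h x)"
  shows "concat (map g xs) = concat (map h xs) \<longleftrightarrow> (\<forall>x\<in>set xs. g x = h x)"
  using assms by (induction xs) auto

lemma sum_prod_bound:
  fixes c :: "nat \<Rightarrow> nat"
  shows "(\<forall>j<n. c j \<ge> 1) \<Longrightarrow> (\<Sum>j<n. c j - 1) + 1 \<le> (\<Prod>j<n. c j)"
proof (induction n)
  case 0 then show ?case by simp
next
  case (Suc n)
  then have IH: "(\<Sum>j<n. c j - 1) + 1 \<le> (\<Prod>j<n. c j)" and c: "c n \<ge> 1" by auto
  have "(\<Prod>j<n. c j) \<ge> 1" using IH by simp
  then obtain p where p: "(\<Prod>j<n. c j) = p + 1" by (metis le_add_diff_inverse2)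
  obtain d where d: "c n = d + 1" using c by (metis le_add_diff_inverse2)
  have "(\<Prod>j<n. c j) * c n \<ge> (\<Prod>j<n. c j) + c n - 1"
    unfolding p d by (simp add: algebra_simps)
  then show ?case using IH c by simp
qed

theorem lemma1:
  fixes Theta :: "(real ^ 'd) set"
    and N :: nat and L :: "nat \<Rightarrow> nat" and R :: "nat \<Rightarrow> nat \<Rightarrow> nat"
    and P :: "nat \<Rightarrow> real ^ 'd \<Rightarrow> 'x measure"
    and sub :: "nat \<Rightarrow> nat \<Rightarrow> 'x \<Rightarrow> 'y"
    and gam :: "nat \<Rightarrow> nat \<Rightarrow> 'y \<Rightarrow> nat"
    and a :: "nat \<Rightarrow> nat \<Rightarrow> nat \<Rightarrow> nat"
    and es :: "nat \<Rightarrow> nat \<Rightarrow> nat \<Rightarrow> nat"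
    and D :: nat
  assumes N_pos: "N \<ge> 1"
    and L_pos: "\<forall>j<N. L j \<ge> 1"
    and R_pos: "\<forall>j<N. \<forall>l<L j. R j l \<ge> 1"
    and prob: "\<forall>j<N. \<forall>theta\<in>Theta. prob_space (P j theta)"
    and quant: "\<forall>j<N. \<forall>l<L j. \<forall>y. gam j l y \<in> {1..R j l}"
    and meas: "\<forall>j<N. \<forall>theta\<in>Theta.
                 Gamma L gam sub j \<in> measurable (P j theta) (count_space UNIV)"
    and D_def: "D = (\<Prod>j<N. \<Prod>l<L j. R j l)"
    and enum_u: "bij_betw a {..<D} (realizations N L R)"
    and enum_S: "\<forall>j<N. bij_betw (es j) {..<card (outcomes L R j)} (outcomes L R j)"
  shows "(inj_on (phi_u P N L gam sub a D) Theta \<longleftrightarrow> inj_on (Psi P N L R gam sub es) Theta)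
       \<and> (identifiable_space Theta P N L R gam sub \<longleftrightarrow> inj_on (Psi P N L R gam sub es) Theta)
       \<and> (\<forall>theta\<in>Theta. length (Psi P N L R gam sub es theta) < length (phi_u P N L gam sub a D theta))
       \<and> (\<Sum>j<N. \<Prod>l<L j. R j l) - N < (\<Prod>j<N. \<Prod>l<L j. R j l)"
proof -
  define S where "S = outcomes L R"
  define q where "q = qprob P L gam sub"
  define c where "c j = card (S j)" for j
  define Rz where "Rz = realizations N L R"
  have Rz: "Rz = PiE {..<N} S" by (simp add: Rz_def S_def realizations_def)
  have finS: "finite (S j)" for j by (simp add: S_def outcomes_def finite_PiE)
  have cR: "c j = (\<Prod>l<L j. R j l)" for j
    by (simp add: c_def S_def outcomes_def card_PiE)
  have c1: "c j \<ge> 1" if "j < N" for j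
    unfolding cR using R_pos that by (intro prod_ge_1) auto
  have Gin: "Gamma L gam sub j x \<in> S j" if "j < N" for j x
    using quant that by (auto simp: Gamma_def S_def outcomes_def)
  have one: "(\<Sum>s\<in>S j. q j s th) = 1" if j: "j < N" and th: "th \<in> Theta" for j th
  proof -
    interpret prob_space "P j th" using prob j th by auto
    define A where "A s = {x \<in> space (P j th). Gamma L gam sub j x = s}" for s
    have Asets: "A ` S j \<subseteq> sets (P j th)"
    proof
      fix B assume "B \<in> A ` S j"
      then obtain s where B: "B = A s" by auto
      have "Gamma L gam sub j -` {s} \<inter> space (P j th) \<in> sets (P j th)"
        using measurable_sets[OF meas[rule_format, OF j th], of "{s}"] by simp
      moreover have "Gamma L gam sub j -` {s} \<inter> space (P j th) = B" by (auto simp: B A_def)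
      ultimately show "B \<in> sets (P j th)" by simp
    qed
    have disj: "disjoint_family_on A (S j)" by (auto simp: disjoint_family_on_def A_def)
    have U: "(\<Union>s\<in>S j. A s) = space (P j th)" using Gin[OF j] by (auto simp: A_def)
    have "measure (P j th) (\<Union>s\<in>S j. A s) = (\<Sum>s\<in>S j. measure (P j th) (A s))"
      by (rule finite_measure_finite_Union[OF finS Asets disj])
    then show ?thesis using U by (simp add: q_def qprob_def A_def prob_space)
  qed
  have F3: "phi_u P N L gam sub a D th = phi_u P N L gam sub a D th' \<longleftrightarrow>
      (\<forall>u\<in>Rz. Pr_u P N L gam sub u th = Pr_u P N L gam sub u th')" for th th'
  proof -
    have img: "a ` {..<D} = Rz" using enum_u by (simp add: bij_betw_def Rz_def)
    have "phi_u P N L gam sub a D th = phi_u P N L gam sub a D th' \<longleftrightarrow>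
        (\<forall>i\<in>{..<D}. Pr_u P N L gam sub (a i) th = Pr_u P N L gam sub (a i) th')"
      by (auto simp: phi_u_def map_eq_conv)
    also have "\<dots> \<longleftrightarrow> (\<forall>u\<in>Rz. Pr_u P N L gam sub u th = Pr_u P N L gam sub u th')"
      using img by blast
    finally show ?thesis .
  qed
  have F4: "(\<forall>u\<in>Rz. Pr_u P N L gam sub u th = Pr_u P N L gam sub u th') \<longleftrightarrow>
      (\<forall>j<N. \<forall>s\<in>S j. q j s th = q j s th')" if th: "th \<in> Theta" "th' \<in> Theta" for th th'
  proof
    assume H: "\<forall>u\<in>Rz. Pr_u P N L gam sub u th = Pr_u P N L gam sub u th'"
    show "\<forall>j<N. \<forall>s\<in>S j. q j s th = q j s th'"
    proof (intro allI impI ballI)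
      fix j s assume j: "j < N" and s: "s \<in> S j"
      have m: "q j s t = (\<Sum>u\<in>Rz. if u j = s then Pr_u P N L gam sub u t else 0)"
        if t: "t \<in> Theta" for t
        unfolding Rz Pr_u_def q_def[symmetric]
        by (rule marginal[symmetric]) (use j s finS one t in auto)
      show "q j s th = q j s th'" unfolding m[OF th(1)] m[OF th(2)]
        using H by (intro sum.cong) auto
    qed
  next
    assume H: "\<forall>j<N. \<forall>s\<in>S j. q j s th = q j s th'"
    show "\<forall>u\<in>Rz. Pr_u P N L gam sub u th = Pr_u P N L gam sub u th'"
      unfolding Pr_u_def q_def[symmetric] Rz using H by (auto intro!: prod.cong simp: PiE_iff)
  qed
  have F5: "Psi P N L R gam sub es th = Psi P N L R gam sub es th' \<longleftrightarrow>
      (\<forall>j<N. \<forall>s\<in>S j. q j s th = q j s th')" if th: "th \<in> Theta" "th' \<in> Theta" for th th'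
  proof -
    have "Psi P N L R gam sub es th = Psi P N L R gam sub es th' \<longleftrightarrow>
        (\<forall>j<N. \<forall>i<c j - 1. q j (es j i) th = q j (es j i) th')"
      unfolding Psi_def q_def[symmetric] S_def[symmetric] c_def[symmetric]
      by (subst concat_eq_iff) (auto simp: map_eq_conv)
    also have "\<dots> \<longleftrightarrow> (\<forall>j<N. \<forall>s\<in>S j. q j s th = q j s th')"
    proof
      assume H: "\<forall>j<N. \<forall>s\<in>S j. q j s th = q j s th'"
      show "\<forall>j<N. \<forall>i<c j - 1. q j (es j i) th = q j (es j i) th'"
      proof (intro allI impI)
        fix j i assume "j < N" "i < c j - 1"
        then have "i \<in> {..<c j}" by simp
        then have "es j i \<in> S j" using enum_S \<open>j < N\<close> unfolding c_def S_def
          by (meson bij_betwE)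
        then show "q j (es j i) th = q j (es j i) th'" using H \<open>j < N\<close> by auto
      qed
    next
      assume H: "\<forall>j<N. \<forall>i<c j - 1. q j (es j i) th = q j (es j i) th'"
      show "\<forall>j<N. \<forall>s\<in>S j. q j s th = q j s th'"
      proof (intro allI impI ballI)
        fix j s assume j: "j < N" and s: "s \<in> S j"
        have bij: "bij_betw (es j) {..<c j} (S j)" using enum_S j by (simp add: c_def S_def)
        have cs: "c j = Suc (c j - 1)" using c1[OF j] by simp
        have sum: "(\<Sum>s\<in>S j. q j s t) = (\<Sum>i<c j - 1. q j (es j i) t) + q j (es j (c j - 1)) t" for t
        proof -
          have "(\<Sum>s\<in>S j. q j s t) = (\<Sum>i<c j. q j (es j i) t)"
            using sum.reindex_bij_betw[OF bij, of "\<lambda>s. q j s t"] by simp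
          also have "\<dots> = (\<Sum>i<Suc (c j - 1). q j (es j i) t)" using cs by metis
          finally show ?thesis by simp
        qed
        have last: "q j (es j (c j - 1)) th = q j (es j (c j - 1)) th'"
        proof -
          have "(\<Sum>i<c j - 1. q j (es j i) th) = (\<Sum>i<c j - 1. q j (es j i) th')"
            using H j by (intro sum.cong) auto
          then show ?thesis using sum[of th] sum[of th'] one[OF j th(1)] one[OF j th(2)] by linarith
        qed
        obtain i where i: "i < c j" "s = es j i" using bij s by (auto simp: bij_betw_def)
        show "q j s th = q j s th'"
        proof (cases "i < c j - 1")
          case True then show ?thesis using H j i by auto
        next
          case False then have "i = c j - 1" using i by linarith
          then show ?thesis using last i by simp
        qed
      qed
    qed
    finally show ?thesis .
  qed
  have eqv: "phi_u P N L gam sub a D th = phi_u P N L gam sub a D th' \<longleftrightarrow>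
      Psi P N L R gam sub es th = Psi P N L R gam sub es th'"
    if "th \<in> Theta" "th' \<in> Theta" for th th'
    using F3 F4[OF that] F5[OF that] by simp
  have A1: "inj_on (phi_u P N L gam sub a D) Theta \<longleftrightarrow> inj_on (Psi P N L R gam sub es) Theta"
    unfolding inj_on_def using eqv by blast
  have A2: "identifiable_space Theta P N L R gam sub \<longleftrightarrow> inj_on (phi_u P N L gam sub a D) Theta"
    unfolding identifiable_space_def identifiable_point_def obs_equiv_def inj_on_def
      F3 Rz_def[symmetric] by blast
  have bound: "(\<Sum>j<N. c j - 1) + 1 \<le> (\<Prod>j<N. c j)"
    by (rule sum_prod_bound) (use c1 in auto)
  have lenPsi: "length (Psi P N L R gam sub es th) = (\<Sum>j<N. c j - 1)" for th
    unfolding Psi_def length_concat S_def[symmetric] c_def[symmetric]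
    by (simp add: sum_list_sum_nth atLeast0LessThan)
  have lenPhi: "length (phi_u P N L gam sub a D th) = (\<Prod>j<N. c j)" for th
    by (simp add: phi_u_def D_def cR)
  have sumc: "(\<Sum>j<N. c j) = (\<Sum>j<N. c j - 1) + N"
  proof -
    have "(\<Sum>j<N. c j) = (\<Sum>j<N. (c j - 1) + 1)" using c1 by (intro sum.cong refl) (metis Suc_diff_1 Suc_eq_plus1 Suc_le_eq lessThan_iff zero_less_one order_less_le_trans)
    also have "\<dots> = (\<Sum>j<N. c j - 1) + (\<Sum>j<N. (1::nat))" by (rule sum.distrib)
    finally show ?thesis by simp
  qed
  have A4: "(\<Sum>j<N. \<Prod>l<L j. R j l) - N < (\<Prod>j<N. \<Prod>l<L j. R j l)"
    using bound sumc by (simp add: cR)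
  show ?thesis using A1 A2 A4 bound lenPsi lenPhi by simp
qed

end
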